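(* Let $G$ be a strongly connected digraph with $N>2$ nodes, and let all nodes run the Privacy-Preserving Push-Sum Algorithm described in the context. Then for every node $i$, with probability one, $$\lim_{k\to\infty}\hat x^{ave}_i(k)=\lim_{k\to\infty}\frac{x^\alpha_{i,1}(k)}{x^\alpha_{i,2}(k)}=\frac1N\sum_{j=1}^N x_j(0),\qquad \lim_{k\to\infty}\frac{x^\beta_{i,1}(k)}{x^\beta_{i,2}(k)}=\frac1N\sum_{j=1}^N x_j(0).$$
   Context: Digraph conventions: $\mathcal V=\{1,\dots,N\}$, no self-loops; $(j,i)\in\mathcal E$ means node $i$ can send messages to node $j$. $N_i^{in}=\{j:(i,j)\in\mathcal E\}$, $N_i^{out}=\{j:(j,i)\in\mathcal E\}$. Strongly connected: a directed path exists from any node to any other node. Privacy-Preserving Push-Sum Algorithm (each node $i$ has a private real initial state $x_i(0)$; $M>0$ is a fixed constant). Initialization: node $i$ draws $x^\alpha_{i,1}(0)\sim U(-M,M)$ and sets $x^\beta_{i,1}(0)=2x_i(0)-x^\alpha_{i,1}(0)$, $x^\alpha_{i,2}(0)=0$, $x^\beta_{i,2}(0)=2$. Weights: at $k=0$, node $i$ draws the numbers $\{p_{ji}(0):j\in N_i^{out}\cup\{i\}\}$ and $\alpha_i(0)$ independently from $\mathcal N(0,M)$ and normalizes them so that $\sum_{j=1}^N p_{ji}(0)+\alpha_i(0)=1$; at each $k\ge1$, node $i$ draws $\{p_{ji}(k):j\in N_i^{out}\cup\{i\}\}$ and $\alpha_i(k)$ independently from $U(0,1)$ and normalizes them so that $\sum_{j=1}^N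 p_{ji}(k)+\alpha_i(k)=1$; in all cases $p_{ji}(k)=0$ if $j\notin N_i^{out}\cup\{i\}$. State update, for $k\ge0$, $l=1,2$: node $i$ sends $p_{ji}(k)x^\alpha_{i,l}(k)$ to each $j\in N_i^{out}$ and updates $$x^\alpha_{i,l}(k+1)=\sum_{j\in N_i^{in}\cup\{i\}}p_{ij}(k)x^\alpha_{j,l}(k)+x^\beta_{i,l}(k),\qquad x^\beta_{i,l}(k+1)=\alpha_i(k)x^\alpha_{i,l}(k).$$ Node $i$'s estimated average is $\hat x^{ave}_i(k+1)=x^\alpha_{i,1}(k+1)/x^\alpha_{i,2}(k+1)$. The substate $x^\beta_{i,l}$ is never transmitted. *)

theory Defs
  imports "HOL-Probability.Probability"
begin

text \<open>Digraph conventions: a pair (j,i) in E means node i can send to node j.\<close>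

definition in_nb :: "(nat \<times> nat) set \<Rightarrow> nat \<Rightarrow> nat set" where
  "in_nb E i = {j. (i, j) \<in> E}"

definition out_nb :: "(nat \<times> nat) set \<Rightarrow> nat \<Rightarrow> nat set" where
  "out_nb E i = {j. (j, i) \<in> E}"

text \<open>Strongly connected: for all nodes i, j of V there is a directed path from i to j
  (a path i -> a -> j consists of edges (a,i), (j,a), so it is (j,i) in E^*).\<close>
definition strongly_connected :: "nat set \<Rightarrow> (nat \<times> nat) set \<Rightarrow> bool" where
  "strongly_connected V E \<longleftrightarrow> (\<forall>i\<in>V. \<forall>j\<in>V. (j, i) \<in> E\<^sup>*)"

text \<open>Labels of the random draws: the initial mask x^alpha_{i,1}(0) of node i,
  the raw (unnormalised) weight for p_{ji}(k), and the raw weight for alpha_i(k).\<close>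
datatype draw = DInit nat | DP nat nat nat | DA nat nat

definition draw_index :: "nat set \<Rightarrow> (nat \<times> nat) set \<Rightarrow> draw set" where
  "draw_index V E =
     DInit ` V
     \<union> {DP j i k | j i k. i \<in> V \<and> j \<in> out_nb E i \<union> {i}}
     \<union> {DA i k | i k. i \<in> V}"

definition unif_density :: "real \<Rightarrow> real \<Rightarrow> real \<Rightarrow> ennreal" where
  "unif_density a b x = ennreal (indicator {a<..<b} x / (b - a))"

text \<open>N(0,M) is read as the normal law with mean 0 and variance M
  (standard deviation sqrt M).\<close>
definition draw_density :: "real \<Rightarrow> draw \<Rightarrow> real \<Rightarrow> ennreal" where
  "draw_density Mc d = (case d of
      DInit _ \<Rightarrow> unif_density (- Mc) Mc
    | DP _ _ k \<Rightarrow> (if k = 0 then (\<lambda>x. ennreal (normal_density 0 (sqrt Mc) x)) else unif_density 0 1)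
    | DA _ k \<Rightarrow> (if k = 0 then (\<lambda>x. ennreal (normal_density 0 (sqrt Mc) x)) else unif_density 0 1))"

definition wden :: "(nat \<times> nat) set \<Rightarrow> (draw \<Rightarrow> real) \<Rightarrow> nat \<Rightarrow> nat \<Rightarrow> real" where
  "wden E d i k = (\<Sum>j\<in>out_nb E i \<union> {i}. d (DP j i k)) + d (DA i k)"

definition pw :: "(nat \<times> nat) set \<Rightarrow> (draw \<Rightarrow> real) \<Rightarrow> nat \<Rightarrow> nat \<Rightarrow> nat \<Rightarrow> real" where
  "pw E d j i k = (if j \<in> out_nb E i \<union> {i} then d (DP j i k) / wden E d i k else 0)"

definition aw :: "(nat \<times> nat) set \<Rightarrow> (draw \<Rightarrow> real) \<Rightarrow> nat \<Rightarrow> nat \<Rightarrow> real" where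
  "aw E d i k = d (DA i k) / wden E d i k"

text \<open>State update (for one index l): returns (x^alpha(k), x^beta(k)) as functions of the node.
  p j i k is the weight p_{ji}(k), a i k is alpha_i(k).\<close>
primrec pp_state :: "(nat \<times> nat) set \<Rightarrow> (nat \<Rightarrow> nat \<Rightarrow> nat \<Rightarrow> real) \<Rightarrow> (nat \<Rightarrow> nat \<Rightarrow> real)
    \<Rightarrow> (nat \<Rightarrow> real) \<times> (nat \<Rightarrow> real) \<Rightarrow> nat \<Rightarrow> (nat \<Rightarrow> real) \<times> (nat \<Rightarrow> real)" where
  "pp_state E p a s0 0 = s0"
| "pp_state E p a s0 (Suc k) =
     (let xa = fst (pp_state E p a s0 k); xb = snd (pp_state E p a s0 k) in
      ((\<lambda>i. (\<Sum>j\<in>in_nb E i \<union> {i}. p i j k * xa j) + xb i),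
       (\<lambda>i. a i k * xa i)))"

text \<open>l = 1: initial x^alpha_{i,1}(0) = drawn mask, x^beta_{i,1}(0) = 2 x_i(0) - mask.\<close>
definition state1 :: "(nat \<times> nat) set \<Rightarrow> (nat \<Rightarrow> real) \<Rightarrow> (draw \<Rightarrow> real) \<Rightarrow> nat
    \<Rightarrow> (nat \<Rightarrow> real) \<times> (nat \<Rightarrow> real)" where
  "state1 E x0 d k = pp_state E (pw E d) (aw E d)
      ((\<lambda>i. d (DInit i)), (\<lambda>i. 2 * x0 i - d (DInit i))) k"

text \<open>l = 2: x^alpha_{i,2}(0) = 0, x^beta_{i,2}(0) = 2.\<close>
definition state2 :: "(nat \<times> nat) set \<Rightarrow> (draw \<Rightarrow> real) \<Rightarrow> nat
    \<Rightarrow> (nat \<Rightarrow> real) \<times> (nat \<Rightarrow> real)" where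
  "state2 E d k = pp_state E (pw E d) (aw E d) ((\<lambda>i. 0), (\<lambda>i. 2)) k"

end

theory Submission
  imports Defs
begin


fun phi :: "'a set \<Rightarrow> (nat \<Rightarrow> 'a \<Rightarrow> 'a \<Rightarrow> real) \<Rightarrow> nat \<Rightarrow> nat \<Rightarrow> 'a \<Rightarrow> 'a \<Rightarrow> real" where
  "phi V C k 0 a b = (if a = b then 1 else 0)"
| "phi V C k (Suc n) a b = (\<Sum>c\<in>V. C (k+n) a c * phi V C k n c b)"

lemma phi_rep:
  assumes "finite V" "\<And>k a. a \<in> V \<Longrightarrow> u (Suc k) a = (\<Sum>b\<in>V. C k a b * u k b)" "a \<in> V"
  shows "u (k+n) a = (\<Sum>b\<in>V. phi V C k n a b * u k b)"
  using assms(3)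
proof (induction n arbitrary: a)
  case 0
  have "(\<Sum>b\<in>V. (if a=b then 1 else 0) * u k b) = (\<Sum>b\<in>V. if a = b then u k b else 0)"
    by (intro sum.cong) auto
  then show ?case using 0 assms(1) by simp
next
  case (Suc n)
  have "u (k + Suc n) a = (\<Sum>c\<in>V. C (k+n) a c * u (k+n) c)"
    using assms(2)[OF Suc.prems] by simp
  also have "\<dots> = (\<Sum>c\<in>V. C (k+n) a c * (\<Sum>b\<in>V. phi V C k n c b * u k b))"
    using Suc.IH by (intro sum.cong) auto
  also have "\<dots> = (\<Sum>c\<in>V. \<Sum>b\<in>V. C (k+n) a c * phi V C k n c b * u k b)"
    by (simp add: sum_distrib_left mult.assoc)
  also have "\<dots> = (\<Sum>b\<in>V. \<Sum>c\<in>V. C (k+n) a c * phi V C k n c b * u k b)"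
    by (rule sum.swap)
  also have "\<dots> = (\<Sum>b\<in>V. phi V C k (Suc n) a b * u k b)"
    by (simp add: sum_distrib_right)
  finally show ?case .
qed

locale rsys =
  fixes V :: "'a set" and C :: "nat \<Rightarrow> 'a \<Rightarrow> 'a \<Rightarrow> real" and s t :: "nat \<Rightarrow> 'a \<Rightarrow> real"
    and k0 :: nat and S T :: real
  assumes finV: "finite V" and neV: "V \<noteq> {}"
  and s_step: "\<And>k a. a \<in> V \<Longrightarrow> s (Suc k) a = (\<Sum>b\<in>V. C k a b * s k b)"
  and t_step: "\<And>k a. a \<in> V \<Longrightarrow> t (Suc k) a = (\<Sum>b\<in>V. C k a b * t k b)"
  and C_nn: "\<And>k a b. k0 \<le> k \<Longrightarrow> a \<in> V \<Longrightarrow> b \<in> V \<Longrightarrow> 0 \<le> C k a b"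
  and t_pos: "\<And>k a. k0 \<le> k \<Longrightarrow> a \<in> V \<Longrightarrow> 0 < t k a"
  and t_sum: "\<And>k. k0 \<le> k \<Longrightarrow> (\<Sum>a\<in>V. t k a) = T"
  and s_sum: "\<And>k. k0 \<le> k \<Longrightarrow> (\<Sum>a\<in>V. s k a) = S"
begin

definition r where "r k a = s k a / t k a"
definition Mx where "Mx k = Max (r k ` V)"
definition Mn where "Mn k = Min (r k ` V)"

lemma phi_nn: "k0 \<le> k \<Longrightarrow> a \<in> V \<Longrightarrow> b \<in> V \<Longrightarrow> 0 \<le> phi V C k n a b"
proof (induction n arbitrary: a)
  case 0 then show ?case by simp
next
  case (Suc n) then show ?case
    by (auto intro!: sum_nonneg mult_nonneg_nonneg C_nn)
qed

lemma r_le_Mx: "a \<in> V \<Longrightarrow> r k a \<le> Mx k"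
  unfolding Mx_def using finV by (intro Max_ge) auto

lemma Mn_le_r: "a \<in> V \<Longrightarrow> Mn k \<le> r k a"
  unfolding Mn_def using finV by (intro Min_le) auto

lemma T_pos: "0 < T"
  using t_sum[of k0] t_pos[of k0] finV neV by (metis order_refl sum_pos)

lemma t_le_T: "k0 \<le> k \<Longrightarrow> a \<in> V \<Longrightarrow> t k a \<le> T"
proof -
  assume k: "k0 \<le> k" and a: "a \<in> V"
  have "t k a \<le> sum (t k) V"
    using finV a t_pos[OF k] by (intro member_le_sum) (auto intro: less_imp_le)
  then show ?thesis using t_sum[OF k] by simp
qed

lemma conv:
  assumes k: "k0 \<le> k" and a: "a \<in> V"
  shows "r (k+n) a = (\<Sum>b\<in>V. (phi V C k n a b * t k b / t (k+n) a) * r k b)"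
    and "(\<Sum>b\<in>V. phi V C k n a b * t k b / t (k+n) a) = 1"
    and "\<And>b. b \<in> V \<Longrightarrow> 0 \<le> phi V C k n a b * t k b / t (k+n) a"
proof -
  have tp: "0 < t (k+n) a" using t_pos k a by simp
  have ts: "t (k+n) a = (\<Sum>b\<in>V. phi V C k n a b * t k b)"
    using phi_rep[where u=t, OF finV t_step a] by blast
  have ss: "s (k+n) a = (\<Sum>b\<in>V. phi V C k n a b * t k b * r k b)"
  proof -
    have "s (k+n) a = (\<Sum>b\<in>V. phi V C k n a b * s k b)"
      using phi_rep[where u=s, OF finV s_step a] by blast
    also have "\<dots> = (\<Sum>b\<in>V. phi V C k n a b * t k b * r k b)"
    proof (intro sum.cong refl)
      fix b assume "b \<in> V"
      then have "t k b * r k b = s k b" using t_pos[OF k, of b] by (simp add: r_def)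
      then show "phi V C k n a b * s k b = phi V C k n a b * t k b * r k b" by (simp add: mult.assoc)
    qed
    finally show ?thesis .
  qed
  show "r (k+n) a = (\<Sum>b\<in>V. (phi V C k n a b * t k b / t (k+n) a) * r k b)"
  proof -
    have "r (k+n) a = (\<Sum>b\<in>V. phi V C k n a b * t k b * r k b) / t (k+n) a"
      unfolding r_def[of "k+n" a] ss by (rule refl)
    also have "\<dots> = (\<Sum>b\<in>V. phi V C k n a b * t k b * r k b / t (k+n) a)"
      by (rule sum_divide_distrib)
    finally show ?thesis by simp
  qed
  show "(\<Sum>b\<in>V. phi V C k n a b * t k b / t (k+n) a) = 1"
    using tp by (simp add: sum_divide_distrib[symmetric] ts[symmetric])
  show "\<And>b. b \<in> V \<Longrightarrow> 0 \<le> phi V C k n a b * t k b / t (k+n) a"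
    using tp t_pos[OF k] phi_nn[OF k a] by (simp add: less_imp_le)
qed

lemma bounds:
  assumes k: "k0 \<le> k" and a: "a \<in> V"
  shows "r (k+n) a \<le> Mx k" "Mn k \<le> r (k+n) a"
proof -
  let ?w = "\<lambda>b. phi V C k n a b * t k b / t (k+n) a"
  have "r (k+n) a = (\<Sum>b\<in>V. ?w b * r k b)" by (rule conv(1)[OF k a])
  also have "\<dots> \<le> (\<Sum>b\<in>V. ?w b * Mx k)"
    by (intro sum_mono mult_left_mono r_le_Mx conv(3)[OF k a])
  also have "\<dots> = (\<Sum>b\<in>V. ?w b) * Mx k" by (rule sum_distrib_right[symmetric])
  also have "\<dots> = Mx k" using conv(2)[OF k a] by simp
  finally show "r (k+n) a \<le> Mx k" .
  have "Mn k = (\<Sum>b\<in>V. ?w b) * Mn k" using conv(2)[OF k a] by simp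
  also have "\<dots> = (\<Sum>b\<in>V. ?w b * Mn k)" by (rule sum_distrib_right)
  also have "\<dots> \<le> (\<Sum>b\<in>V. ?w b * r k b)"
    by (intro sum_mono mult_left_mono Mn_le_r conv(3)[OF k a])
  also have "\<dots> = r (k+n) a" by (rule conv(1)[OF k a, symmetric])
  finally show "Mn k \<le> r (k+n) a" .
qed

lemma Mx_mono: "k0 \<le> k \<Longrightarrow> Mx (k+n) \<le> Mx k"
  unfolding Mx_def[of "k+n"] using finV neV bounds(1)
  by (intro Max.boundedI) auto

lemma Mn_mono: "k0 \<le> k \<Longrightarrow> Mn k \<le> Mn (k+n)"
  unfolding Mn_def[of "k+n"] using finV neV bounds(2)
  by (intro Min.boundedI) auto

lemma Mn_le_Mx: "Mn k \<le> Mx k"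
proof -
  obtain a where "a \<in> V" using neV by auto
  then show ?thesis using Mn_le_r r_le_Mx by (meson order_trans)
qed

lemma avg:
  assumes k: "k0 \<le> k"
  shows "S / T \<le> Mx k" "Mn k \<le> S / T"
proof -
  have S: "S = (\<Sum>a\<in>V. t k a * r k a)"
  proof -
    have "\<And>a. a \<in> V \<Longrightarrow> s k a = t k a * r k a"
    proof -
      fix a assume "a \<in> V"
      then have "t k a \<noteq> 0" using t_pos[OF k, of a] by simp
      then show "s k a = t k a * r k a" by (simp add: r_def)
    qed
    then show ?thesis using s_sum[OF k] by (metis (no_types, lifting) sum.cong)
  qed
  have "S \<le> (\<Sum>a\<in>V. t k a * Mx k)" unfolding S
    by (intro sum_mono mult_left_mono r_le_Mx) (auto intro: less_imp_le t_pos[OF k])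
  also have "\<dots> = T * Mx k" using t_sum[OF k] by (simp add: sum_distrib_right[symmetric])
  finally show "S / T \<le> Mx k" using T_pos by (simp add: divide_le_eq mult.commute)
  have "T * Mn k = (\<Sum>a\<in>V. t k a * Mn k)" using t_sum[OF k] by (simp add: sum_distrib_right[symmetric])
  also have "\<dots> \<le> S" unfolding S
    by (intro sum_mono mult_left_mono Mn_le_r) (auto intro: less_imp_le t_pos[OF k])
  finally show "Mn k \<le> S / T" using T_pos by (simp add: le_divide_eq mult.commute)
qed

lemma contract:
  assumes k: "k0 \<le> k" and d0: "0 \<le> \<delta>"
    and phi_lb: "\<And>a b. a \<in> V \<Longrightarrow> b \<in> V \<Longrightarrow> \<delta> \<le> phi V C k n a b"
  shows "Mx (k+n) - Mn (k+n) \<le> (1 - \<delta>) * (Mx k - Mn k)"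
proof -
  have "Mx (k+n) \<in> r (k+n) ` V" using Max_in[of "r (k+n) ` V"] finV neV unfolding Mx_def by auto
  then obtain a where a: "a \<in> V" "r (k+n) a = Mx (k+n)" by auto
  have "Mn (k+n) \<in> r (k+n) ` V" using Min_in[of "r (k+n) ` V"] finV neV unfolding Mn_def by auto
  then obtain a' where a': "a' \<in> V" "r (k+n) a' = Mn (k+n)" by auto
  define w where "w b = phi V C k n a b * t k b / t (k+n) a" for b
  define w' where "w' b = phi V C k n a' b * t k b / t (k+n) a'" for b
  define \<mu> where "\<mu> b = min (w b) (w' b)" for b
  have w1: "r (k+n) a = (\<Sum>b\<in>V. w b * r k b)" "(\<Sum>b\<in>V. w b) = 1" "\<And>b. b \<in> V \<Longrightarrow> 0 \<le> w b"
    unfolding w_def using conv[OF k a(1)] by auto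
  have w2: "r (k+n) a' = (\<Sum>b\<in>V. w' b * r k b)" "(\<Sum>b\<in>V. w' b) = 1" "\<And>b. b \<in> V \<Longrightarrow> 0 \<le> w' b"
    unfolding w'_def using conv[OF k a'(1)] by auto
  have lb: "\<delta> * t k b / T \<le> w b" "\<delta> * t k b / T \<le> w' b" if b: "b \<in> V" for b
  proof -
    have tb: "0 < t k b" using t_pos[OF k b] .
    have "\<delta> * t k b / T \<le> \<delta> * t k b / t (k+n) x" if x: "x \<in> V" for x
      using t_pos[of "k+n" x] t_le_T[of "k+n" x] k x tb d0
      by (intro divide_left_mono) auto
    moreover have "\<delta> * t k b / t (k+n) x \<le> phi V C k n x b * t k b / t (k+n) x" if x: "x \<in> V" for x
      using t_pos[of "k+n" x] k x tb phi_lb[OF x b]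
      by (intro divide_right_mono mult_right_mono) auto
    ultimately show "\<delta> * t k b / T \<le> w b" "\<delta> * t k b / T \<le> w' b"
      unfolding w_def w'_def using a(1) a'(1) by (meson order_trans)+
  qed
  have smu: "\<delta> \<le> (\<Sum>b\<in>V. \<mu> b)"
  proof -
    have "\<delta> = (\<Sum>b\<in>V. \<delta> * t k b / T)"
      using t_sum[OF k] T_pos by (simp add: sum_divide_distrib[symmetric] sum_distrib_left[symmetric])
    also have "\<dots> \<le> (\<Sum>b\<in>V. \<mu> b)" using lb unfolding \<mu>_def by (intro sum_mono) auto
    finally show ?thesis .
  qed
  have up: "r (k+n) a \<le> (\<Sum>b\<in>V. \<mu> b * r k b) + (1 - (\<Sum>b\<in>V. \<mu> b)) * Mx k"
  proof -
    have "r (k+n) a = (\<Sum>b\<in>V. \<mu> b * r k b) + (\<Sum>b\<in>V. (w b - \<mu> b) * r k b)"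
      unfolding w1(1) by (simp add: sum.distrib[symmetric] algebra_simps)
    also have "(\<Sum>b\<in>V. (w b - \<mu> b) * r k b) \<le> (\<Sum>b\<in>V. (w b - \<mu> b) * Mx k)"
      by (intro sum_mono mult_left_mono r_le_Mx) (auto simp: \<mu>_def)
    also have "\<dots> = (1 - (\<Sum>b\<in>V. \<mu> b)) * Mx k"
      using w1(2) by (simp add: sum_distrib_right[symmetric] sum_subtractf)
    finally show ?thesis by simp
  qed
  have lo: "(\<Sum>b\<in>V. \<mu> b * r k b) + (1 - (\<Sum>b\<in>V. \<mu> b)) * Mn k \<le> r (k+n) a'"
  proof -
    have "(1 - (\<Sum>b\<in>V. \<mu> b)) * Mn k = (\<Sum>b\<in>V. (w' b - \<mu> b) * Mn k)"
      using w2(2) by (simp add: sum_distrib_right[symmetric] sum_subtractf)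
    also have "\<dots> \<le> (\<Sum>b\<in>V. (w' b - \<mu> b) * r k b)"
      by (intro sum_mono mult_left_mono Mn_le_r) (auto simp: \<mu>_def)
    finally have "(\<Sum>b\<in>V. \<mu> b * r k b) + (1 - (\<Sum>b\<in>V. \<mu> b)) * Mn k \<le>
       (\<Sum>b\<in>V. \<mu> b * r k b) + (\<Sum>b\<in>V. (w' b - \<mu> b) * r k b)" by simp
    also have "\<dots> = r (k+n) a'"
      unfolding w2(1) by (simp add: sum.distrib[symmetric] algebra_simps)
    finally show ?thesis .
  qed
  have D: "0 \<le> Mx k - Mn k" using Mn_le_Mx[of k] by simp
  have "Mx (k+n) - Mn (k+n) \<le> (1 - (\<Sum>b\<in>V. \<mu> b)) * (Mx k - Mn k)"
    using up lo a(2) a'(2) by (simp add: algebra_simps)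
  also have "\<dots> \<le> (1 - \<delta>) * (Mx k - Mn k)"
    using smu D by (intro mult_right_mono) auto
  finally show ?thesis .
qed

lemma converge:
  assumes d: "0 < \<delta>" "\<delta> \<le> 1" and L: "0 < L"
    and good: "\<And>m0. \<exists>m\<ge>m0. \<forall>a\<in>V. \<forall>b\<in>V. \<delta> \<le> phi V C (k0 + m*L) L a b"
    and a: "a \<in> V"
  shows "(\<lambda>k. s k a / t k a) \<longlonglongrightarrow> S / T"
proof -
  define D where "D k = Mx k - Mn k" for k
  have D0: "0 \<le> D k" for k unfolding D_def using Mn_le_Mx[of k] by simp
  have Dmono: "D (k+n) \<le> D k" if "k0 \<le> k" for k n
    unfolding D_def using Mx_mono[OF that, of n] Mn_mono[OF that, of n] by simp
  have Dmono': "D k' \<le> D k" if "k0 \<le> k" "k \<le> k'" for k k'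
    using Dmono[OF that(1), of "k'-k"] that by simp
  have step: "\<exists>K\<ge>k0. D K \<le> (1-\<delta>)^j * D k0" for j
  proof (induction j)
    case 0 then show ?case by auto
  next
    case (Suc j)
    then obtain K where K: "k0 \<le> K" "D K \<le> (1-\<delta>)^j * D k0" by auto
    obtain m where m: "m \<ge> K" "\<forall>a\<in>V. \<forall>b\<in>V. \<delta> \<le> phi V C (k0 + m*L) L a b" using good by blast
    have "m \<le> m*L" using L by simp
    then have mK: "K \<le> k0 + m*L" using m(1) by linarith
    have "D (k0 + m*L + L) \<le> (1 - \<delta>) * D (k0 + m*L)"
      unfolding D_def using m(2) d by (intro contract) auto
    also have "\<dots> \<le> (1 - \<delta>) * D K" using Dmono'[OF K(1) mK] d by (intro mult_left_mono) auto
    also have "\<dots> \<le> (1 - \<delta>) * ((1-\<delta>)^j * D k0)" using K(2) d by (intro mult_left_mono) auto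
    finally show ?case by (intro exI[of _ "k0 + m*L + L"]) auto
  qed
  have close: "\<bar>s k a / t k a - S / T\<bar> \<le> D k" if "k0 \<le> k" for k
    using bounds[OF that a, of 0] avg[OF that] unfolding D_def r_def by auto
  show ?thesis
    unfolding lim_sequentially
  proof (intro allI impI)
    fix e :: real assume e: "0 < e"
    show "\<exists>no. \<forall>n\<ge>no. dist (s n a / t n a) (S / T) < e"
    proof (cases "D k0 = 0")
      case True
      have "\<forall>n\<ge>k0. dist (s n a / t n a) (S / T) < e"
      proof (intro allI impI)
        fix n assume n: "k0 \<le> n"
        have "dist (s n a / t n a) (S / T) \<le> D n" using close[OF n] by (simp add: dist_real_def)
        also have "\<dots> \<le> D k0" by (rule Dmono'[OF order_refl n])
        finally show "dist (s n a / t n a) (S / T) < e" using True e by simp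
      qed
      then show ?thesis by blast
    next
      case False
      then have Dp: "0 < D k0" using D0[of k0] by simp
      obtain j where j: "(1-\<delta>)^j < e / D k0"
        using real_arch_pow_inv[of "e / D k0" "1-\<delta>"] e Dp d by auto
      obtain K where K: "k0 \<le> K" "D K \<le> (1-\<delta>)^j * D k0" using step by blast
      have "(1-\<delta>)^j * D k0 < e" using j Dp by (simp add: pos_less_divide_eq)
      then have "\<forall>n\<ge>K. dist (s n a / t n a) (S / T) < e"
      proof (intro allI impI)
        fix n assume n: "K \<le> n"
        have "dist (s n a / t n a) (S / T) \<le> D n" using close[of n] n K(1) by (simp add: dist_real_def)
        also have "\<dots> \<le> D K" by (rule Dmono'[OF K(1) n])
        finally show "dist (s n a / t n a) (S / T) < e" using K(2) \<open>(1-\<delta>)^j * D k0 < e\<close> by simp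
      qed
      then show ?thesis by blast
    qed
  qed
qed

end


inductive walk :: "'a set \<Rightarrow> ('a \<Rightarrow> 'a \<Rightarrow> bool) \<Rightarrow> nat \<Rightarrow> 'a \<Rightarrow> 'a \<Rightarrow> bool" for V R where
  w0: "b \<in> V \<Longrightarrow> walk V R 0 b b"
| wS: "walk V R n b c \<Longrightarrow> R c a \<Longrightarrow> a \<in> V \<Longrightarrow> walk V R (Suc n) b a"

lemma walk_V: "walk V R n b a \<Longrightarrow> b \<in> V \<and> a \<in> V"
  by (induction rule: walk.induct) auto

lemma walk_trans: "walk V R n c a \<Longrightarrow> walk V R m b c \<Longrightarrow> walk V R (m+n) b a"
  by (induction rule: walk.induct) (auto intro: walk.intros)

lemma walk1: "R b a \<Longrightarrow> b \<in> V \<Longrightarrow> a \<in> V \<Longrightarrow> walk V R 1 b a"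
  using wS[OF w0] by fastforce

lemma walk_pad: "walk V R n b a \<Longrightarrow> R a a \<Longrightarrow> walk V R (n+m) b a"
proof (induction m)
  case 0 then show ?case by simp
next
  case (Suc m)
  then have "walk V R (Suc (n+m)) b a" using walk_V[OF Suc.prems(1)] by (intro wS) auto
  then show ?case by simp
qed

lemma phi_nn_gen:
  assumes "\<And>m a b. m < n \<Longrightarrow> a \<in> V \<Longrightarrow> b \<in> V \<Longrightarrow> 0 \<le> C (k+m) a b" "a \<in> V" "b \<in> V"
  shows "0 \<le> phi V C k n a b"
  using assms
proof (induction n arbitrary: a)
  case 0 then show ?case by simp
next
  case (Suc n)
  then show ?case by (auto intro!: sum_nonneg mult_nonneg_nonneg)
qed

lemma phi_lb:
  assumes fin: "finite V" and d0: "0 \<le> \<delta>"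
  shows "walk V R n b a \<Longrightarrow> (\<forall>m a b. m < n \<longrightarrow> a \<in> V \<longrightarrow> b \<in> V \<longrightarrow> 0 \<le> C (k+m) a b) \<Longrightarrow>
     (\<forall>m a b. m < n \<longrightarrow> a \<in> V \<longrightarrow> b \<in> V \<longrightarrow> R b a \<longrightarrow> \<delta> \<le> C (k+m) a b) \<Longrightarrow>
     \<delta> ^ n \<le> phi V C k n a b"
proof (induction rule: walk.induct)
  case (w0 b) then show ?case by simp
next
  case (wS n b c a)
  have cV: "c \<in> V" "b \<in> V" using walk_V[OF wS.hyps(1)] by auto
  have IH: "\<delta>^n \<le> phi V C k n c b" using wS.IH wS.prems by auto
  have nn: "\<And>c'. c' \<in> V \<Longrightarrow> 0 \<le> C (k+n) a c' * phi V C k n c' b"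
    using wS.prems(1) wS.hyps(3) cV phi_nn_gen[of n V C k _ b]
    by (auto intro!: mult_nonneg_nonneg)
  have "\<delta> ^ Suc n = \<delta> * \<delta>^n" by simp
  also have "\<dots> \<le> C (k+n) a c * phi V C k n c b"
    using wS.prems wS.hyps cV IH d0 by (intro mult_mono) auto
  also have "\<dots> \<le> (\<Sum>c'\<in>V. C (k+n) a c' * phi V C k n c' b)"
    using fin cV nn by (intro member_le_sum) auto
  finally show ?case by simp
qed



fun Cm :: "(nat \<times> nat) set \<Rightarrow> (draw \<Rightarrow> real) \<Rightarrow> nat \<Rightarrow> nat \<times> bool \<Rightarrow> nat \<times> bool \<Rightarrow> real" where
  "Cm E d k (i,bi) (j,bj) = (if bi then (if bj then 0 else (if i = j then aw E d i k else 0))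
      else (if bj then (if i = j then 1 else 0) else pw E d i j k))"

fun vec :: "(nat \<Rightarrow> real) \<times> (nat \<Rightarrow> real) \<Rightarrow> nat \<times> bool \<Rightarrow> real" where
  "vec p (i,b) = (if b then snd p i else fst p i)"

lemma sumV2: "finite V \<Longrightarrow> (\<Sum>a\<in>V \<times> UNIV. f a) = (\<Sum>i\<in>V. f (i,False) + f (i,True))"
proof -
  have "(\<Sum>a\<in>V \<times> UNIV. f a) = (\<Sum>i\<in>V. \<Sum>b\<in>(UNIV::bool set). f (i,b))"
    by (simp add: sum.cartesian_product)
  then show ?thesis by (simp add: UNIV_bool add.commute)
qed

lemma sum_delta_mult: "finite V \<Longrightarrow> i \<in> V \<Longrightarrow> (\<Sum>j\<in>V. (if i = j then c else 0) * g j) = (c::real) * g i"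
proof -
  assume "finite V" "i \<in> V"
  have "(\<Sum>j\<in>V. (if i = j then c else 0) * g j) = (\<Sum>j\<in>V. if i = j then c * g j else 0)"
    by (intro sum.cong) auto
  then show ?thesis using \<open>finite V\<close> \<open>i \<in> V\<close> by simp
qed

lemma pw_zero: "j \<notin> in_nb E i \<union> {i} \<Longrightarrow> pw E d i j k = 0"
  by (auto simp: pw_def in_nb_def out_nb_def)

lemma in_sub: "E \<subseteq> V \<times> V \<Longrightarrow> i \<in> V \<Longrightarrow> in_nb E i \<union> {i} \<subseteq> V"
  by (auto simp: in_nb_def)

lemma out_sub: "E \<subseteq> V \<times> V \<Longrightarrow> i \<in> V \<Longrightarrow> out_nb E i \<union> {i} \<subseteq> V"
  by (auto simp: out_nb_def)

lemma pp_step: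
  assumes fin: "finite V" and E: "E \<subseteq> V \<times> V" and a: "a \<in> V \<times> UNIV"
  shows "vec (pp_state E (pw E d) (aw E d) s0 (Suc k)) a =
    (\<Sum>b\<in>V \<times> UNIV. Cm E d k a b * vec (pp_state E (pw E d) (aw E d) s0 k) b)"
proof -
  obtain i bi where a': "a = (i,bi)" "i \<in> V" using a by auto
  define xa where "xa = fst (pp_state E (pw E d) (aw E d) s0 k)"
  define xb where "xb = snd (pp_state E (pw E d) (aw E d) s0 k)"
  have sw: "(\<Sum>j\<in>in_nb E i \<union> {i}. pw E d i j k * xa j) = (\<Sum>j\<in>V. pw E d i j k * xa j)"
    using in_sub[OF E a'(2)] fin by (intro sum.mono_neutral_left) (auto simp: pw_zero)
  show ?thesis
  proof (cases bi)
    case True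
    have "(\<Sum>b\<in>V \<times> UNIV. Cm E d k a b * vec (pp_state E (pw E d) (aw E d) s0 k) b)
        = (\<Sum>j\<in>V. (if i = j then aw E d i k else 0) * xa j)"
      using a' True fin by (simp add: sumV2 xa_def)
    also have "\<dots> = aw E d i k * xa i" using sum_delta_mult[OF fin a'(2)] .
    finally show ?thesis using a' True by (simp add: Let_def xa_def)
  next
    case False
    have "(\<Sum>b\<in>V \<times> UNIV. Cm E d k a b * vec (pp_state E (pw E d) (aw E d) s0 k) b)
        = (\<Sum>j\<in>V. pw E d i j k * xa j + (if i = j then 1 else 0) * xb j)"
      using a' False fin by (simp add: sumV2 xa_def xb_def)
    also have "\<dots> = (\<Sum>j\<in>V. pw E d i j k * xa j) + xb i"
      using a' fin sum_delta_mult[OF fin a'(2), of 1 xb] by (simp add: sum.distrib)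
    finally show ?thesis using a' False sw by (simp add: Let_def xa_def xb_def)
  qed
qed

lemma col_sum:
  assumes fin: "finite V" and E: "E \<subseteq> V \<times> V" and b: "b \<in> V \<times> UNIV" and nz: "wden E d (fst b) k \<noteq> 0"
  shows "(\<Sum>a\<in>V \<times> UNIV. Cm E d k a b) = 1"
proof -
  obtain j bj where b': "b = (j,bj)" "j \<in> V" using b by auto
  show ?thesis
  proof (cases bj)
    case True
    then show ?thesis using b' fin by (simp add: sumV2)
  next
    case False
    have "(\<Sum>a\<in>V \<times> UNIV. Cm E d k a b) = (\<Sum>i\<in>V. pw E d i j k) + aw E d j k"
      using b' False fin by (simp add: sumV2 sum.distrib)
    also have "(\<Sum>i\<in>V. pw E d i j k) = (\<Sum>i\<in>out_nb E j \<union> {j}. pw E d i j k)"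
      using out_sub[OF E b'(2)] fin by (intro sum.mono_neutral_right) (auto simp: pw_def)
    also have "\<dots> = (\<Sum>i\<in>out_nb E j \<union> {j}. d (DP i j k) / wden E d j k)"
      by (intro sum.cong) (auto simp: pw_def)
    also have "\<dots> + aw E d j k = ((\<Sum>i\<in>out_nb E j \<union> {j}. d (DP i j k)) + d (DA j k)) / wden E d j k"
      unfolding aw_def by (simp only: sum_divide_distrib[symmetric] add_divide_distrib[symmetric])
    also have "\<dots> = 1" using nz b' unfolding wden_def by simp
    finally show ?thesis .
  qed
qed

lemma conserve:
  assumes fin: "finite V" and E: "E \<subseteq> V \<times> V" and nz: "\<And>j. j \<in> V \<Longrightarrow> wden E d j k \<noteq> 0"
  shows "(\<Sum>a\<in>V \<times> UNIV. vec (pp_state E (pw E d) (aw E d) s0 (Suc k)) a) =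
         (\<Sum>a\<in>V \<times> UNIV. vec (pp_state E (pw E d) (aw E d) s0 k) a)"
proof -
  let ?u = "vec (pp_state E (pw E d) (aw E d) s0 k)"
  have finV2: "finite (V \<times> (UNIV :: bool set))" using fin by simp
  have "(\<Sum>a\<in>V \<times> UNIV. vec (pp_state E (pw E d) (aw E d) s0 (Suc k)) a)
      = (\<Sum>a\<in>V \<times> UNIV. \<Sum>b\<in>V \<times> UNIV. Cm E d k a b * ?u b)"
    using pp_step[OF fin E] by (intro sum.cong) auto
  also have "\<dots> = (\<Sum>b\<in>V \<times> UNIV. \<Sum>a\<in>V \<times> UNIV. Cm E d k a b * ?u b)"
    by (rule sum.swap)
  also have "\<dots> = (\<Sum>b\<in>V \<times> UNIV. (\<Sum>a\<in>V \<times> UNIV. Cm E d k a b) * ?u b)"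
    by (simp add: sum_distrib_right)
  also have "\<dots> = (\<Sum>b\<in>V \<times> UNIV. ?u b)"
    using col_sum[OF fin E] nz by (intro sum.cong) auto
  finally show ?thesis .
qed

lemma conserve_all:
  assumes fin: "finite V" and E: "E \<subseteq> V \<times> V" and nz: "\<And>j k. j \<in> V \<Longrightarrow> wden E d j k \<noteq> 0"
  shows "(\<Sum>a\<in>V \<times> UNIV. vec (pp_state E (pw E d) (aw E d) s0 k) a) =
         (\<Sum>a\<in>V \<times> UNIV. vec s0 a)"
proof (induction k)
  case 0 then show ?case by simp
next
  case (Suc k)
  have "(\<Sum>a\<in>V \<times> UNIV. vec (pp_state E (pw E d) (aw E d) s0 (Suc k)) a) =
         (\<Sum>a\<in>V \<times> UNIV. vec (pp_state E (pw E d) (aw E d) s0 k) a)"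
    by (rule conserve[OF fin E nz])
  then show ?case using Suc.IH by (rule trans)
qed



definition posd :: "nat \<Rightarrow> (nat \<times> nat) set \<Rightarrow> (draw \<Rightarrow> real) \<Rightarrow> bool" where
  "posd N E d \<longleftrightarrow> (\<forall>k\<ge>1. \<forall>i\<in>{1..N}. (\<forall>j\<in>out_nb E i \<union> {i}. 0 < d (DP j i k) \<and> d (DP j i k) < 1)
      \<and> 0 < d (DA i k) \<and> d (DA i k) < 1)"

definition blk :: "nat \<Rightarrow> (nat \<times> nat) set \<Rightarrow> nat \<Rightarrow> nat \<Rightarrow> draw set" where
  "blk N E L s = {DP j i k | j i k. i \<in> {1..N} \<and> j \<in> out_nb E i \<union> {i} \<and> k \<in> {s..<s+L}}
     \<union> {DA i k | i k. i \<in> {1..N} \<and> k \<in> {s..<s+L}}"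

definition goodb :: "nat \<Rightarrow> (nat \<times> nat) set \<Rightarrow> nat \<Rightarrow> (draw \<Rightarrow> real) \<Rightarrow> nat \<Rightarrow> bool" where
  "goodb N E L d s \<longleftrightarrow> (\<forall>dr\<in>blk N E L s. 1/2 \<le> d dr)"

fun Rg :: "(nat \<times> nat) set \<Rightarrow> nat \<times> bool \<Rightarrow> nat \<times> bool \<Rightarrow> bool" where
  "Rg E (j,bj) (i,bi) = (if bj then (\<not> bi \<and> i = j) else (if bi then i = j else ((i,j) \<in> E \<or> i = j)))"

lemma wden_pos:
  assumes "posd N E d" "1 \<le> k" "i \<in> {1..N}"
  shows "0 < wden E d i k"
proof -
  have "0 \<le> (\<Sum>j\<in>out_nb E i \<union> {i}. d (DP j i k))"
    using assms unfolding posd_def by (intro sum_nonneg) (auto intro: less_imp_le)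
  moreover have "0 < d (DA i k)" using assms unfolding posd_def by auto
  ultimately show ?thesis unfolding wden_def by simp
qed

lemma wden_le:
  assumes E: "E \<subseteq> {1..N} \<times> {1..N}" and p: "posd N E d" "1 \<le> k" "i \<in> {1..N}"
  shows "wden E d i k \<le> real N + 1"
proof -
  have sub: "out_nb E i \<union> {i} \<subseteq> {1..N}" using out_sub[OF E p(3)] .
  have "(\<Sum>j\<in>out_nb E i \<union> {i}. d (DP j i k)) \<le> (\<Sum>j\<in>out_nb E i \<union> {i}. 1)"
    using p unfolding posd_def by (intro sum_mono) (auto intro: less_imp_le)
  also have "\<dots> = real (card (out_nb E i \<union> {i}))" by simp
  also have "\<dots> \<le> real N" using card_mono[OF _ sub] by simp
  finally have 1: "(\<Sum>j\<in>out_nb E i \<union> {i}. d (DP j i k)) \<le> real N" .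
  have "d (DA i k) < 1" using p unfolding posd_def by auto
  then show ?thesis using 1 unfolding wden_def by simp
qed

lemma Cm_nn:
  assumes "posd N E d" "1 \<le> k" "a \<in> {1..N} \<times> UNIV" "b \<in> {1..N} \<times> UNIV"
  shows "0 \<le> Cm E d k a b"
proof -
  obtain i bi j bj where ab: "a = (i,bi)" "b = (j,bj)" "i \<in> {1..N}" "j \<in> {1..N}" using assms by auto
  have w: "0 < wden E d j k" "0 < wden E d i k" using wden_pos[OF assms(1,2)] ab by auto
  have "0 \<le> pw E d i j k" using w assms(1,2) ab unfolding pw_def posd_def
    by (auto intro!: divide_nonneg_pos less_imp_le)
  moreover have "0 \<le> aw E d i k" using w assms(1,2) ab unfolding aw_def posd_def
    by (auto intro!: divide_nonneg_pos less_imp_le)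
  ultimately show ?thesis using ab by auto
qed

lemma pw_self_pos:
  assumes "posd N E d" "1 \<le> k" "i \<in> {1..N}"
  shows "0 < pw E d i i k" "0 < aw E d i k"
  using wden_pos[OF assms] assms unfolding pw_def aw_def posd_def by auto

lemma Cm_lb:
  assumes E: "E \<subseteq> {1..N} \<times> {1..N}" and p: "posd N E d" "1 \<le> k"
    and g: "\<forall>i\<in>{1..N}. (\<forall>j\<in>out_nb E i \<union> {i}. 1/2 \<le> d (DP j i k)) \<and> 1/2 \<le> d (DA i k)"
    and ab: "a \<in> {1..N} \<times> UNIV" "b \<in> {1..N} \<times> UNIV" "Rg E b a"
  shows "1 / (2 * (real N + 1)) \<le> Cm E d k a b"
proof -
  obtain i bi j bj where ab': "a = (i,bi)" "b = (j,bj)" "i \<in> {1..N}" "j \<in> {1..N}" using ab by auto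
  have key: "1 / (2 * (real N + 1)) \<le> x / wden E d j' k" if "j' \<in> {1..N}" "1/2 \<le> x" for j' x
  proof -
    have w: "0 < wden E d j' k" "wden E d j' k \<le> real N + 1"
      using wden_pos[OF p that(1)] wden_le[OF E p that(1)] by auto
    have "1 / (2 * (real N + 1)) = (1/2) / (real N + 1)" by simp
    also have "\<dots> \<le> (1/2) / wden E d j' k" using w by (intro divide_left_mono) auto
    also have "\<dots> \<le> x / wden E d j' k" using w that by (intro divide_right_mono) auto
    finally show ?thesis .
  qed
  have N1: "1 / (2 * (real N + 1)) \<le> 1" by (simp add: field_simps)
  show ?thesis
  proof (cases bj)
    case True
    then have "\<not> bi" "i = j" using ab(3) ab' by auto
    then show ?thesis using ab' True N1 by simp
  next
    case False
    show ?thesis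
    proof (cases bi)
      case True
      then have "i = j" using ab(3) ab' False by auto
      then show ?thesis using ab' True False key[OF ab'(3), of "d (DA i k)"] g
        by (simp add: aw_def)
    next
      case bF: False
      then have "(i,j) \<in> E \<or> i = j" using ab(3) ab' False by auto
      then have "i \<in> out_nb E j \<union> {j}" by (auto simp: out_nb_def)
      moreover have "1/2 \<le> d (DP i j k)" using g ab'(4) calculation by blast
      ultimately show ?thesis using ab' bF False key[OF ab'(4), of "d (DP i j k)"]
        by (simp add: pw_def)
    qed
  qed
qed

lemma walk_exists:
  assumes E: "E \<subseteq> {1..N} \<times> {1..N}" and sc: "strongly_connected {1..N} E" and N: "0 < N"
  shows "\<exists>L>0. \<forall>a\<in>{1..N} \<times> UNIV. \<forall>b\<in>{1..N} \<times> UNIV. walk ({1..N} \<times> UNIV) (Rg E) L b a"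
proof -
  let ?V = "{1..N}" let ?W = "{1..N} \<times> (UNIV :: bool set)"
  have alpha: "\<exists>n. walk ?W (Rg E) n (j,False) (i,False)" if ij: "i \<in> ?V" "j \<in> ?V" for i j
  proof -
    have "(i,j) \<in> E\<^sup>*" using sc ij unfolding strongly_connected_def by auto
    then show ?thesis
    proof (induction rule: converse_rtrancl_induct)
      case base
      then show ?case using ij by (auto intro!: exI[of _ 0] w0)
    next
      case (step y z)
      then obtain n where n: "walk ?W (Rg E) n (j,False) (z,False)" by auto
      have "y \<in> ?V" using step.hyps(1) E by auto
      then have "walk ?W (Rg E) (Suc n) (j,False) (y,False)"
        using n step.hyps(1) by (intro wS) auto
      then show ?case by blast
    qed
  qed
  then have "\<forall>p\<in>?V \<times> ?V. \<exists>n. walk ?W (Rg E) n (snd p,False) (fst p,False)" by auto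
  then obtain f where f: "\<forall>p\<in>?V \<times> ?V. walk ?W (Rg E) (f p) (snd p,False) (fst p,False)"
    by (metis bchoice)
  define La where "La = Max (f ` (?V \<times> ?V))"
  have wa: "walk ?W (Rg E) La (j,False) (i,False)" if ij: "i \<in> ?V" "j \<in> ?V" for i j
  proof -
    have le: "f (i,j) \<le> La" unfolding La_def using ij by (intro Max_ge) auto
    have "walk ?W (Rg E) (f (i,j) + (La - f (i,j))) (j,False) (i,False)"
      using f ij by (intro walk_pad) auto
    then show ?thesis using le by simp
  qed
  have all: "walk ?W (Rg E) (1 + La + 1) b a" if ab: "a \<in> ?W" "b \<in> ?W" for a b
  proof -
    obtain i bi j bj where ab': "a = (i,bi)" "b = (j,bj)" "i \<in> ?V" "j \<in> ?V" using ab by auto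
    have 1: "walk ?W (Rg E) 1 b (j,False)" using ab' by (intro walk1) auto
    have 2: "walk ?W (Rg E) 1 (i,False) a" using ab' by (intro walk1) auto
    have "walk ?W (Rg E) (1 + La) b (i,False)" using walk_trans[OF wa[OF ab'(3,4)] 1] .
    then show ?thesis using walk_trans[OF 2] by blast
  qed
  then show ?thesis by (intro exI[of _ "1 + La + 1"]) auto
qed



lemma pw_nn:
  assumes "posd N E d" "1 \<le> k" "j \<in> {1..N}"
  shows "0 \<le> pw E d i j k"
  using wden_pos[OF assms] assms unfolding pw_def posd_def
  by (auto intro!: divide_nonneg_pos less_imp_le)

lemma st2_pos:
  assumes E: "E \<subseteq> {1..N} \<times> {1..N}" and p: "posd N E d" and k: "1 \<le> k"
  shows "\<forall>i\<in>{1..N}. 0 < fst (state2 E d k) i \<and> 0 \<le> snd (state2 E d k) i"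
  using k
proof (induction k rule: dec_induct)
  case base
  then show ?case by (simp add: state2_def)
next
  case (step k)
  show ?case
  proof
    fix i assume i: "i \<in> {1..N}"
    let ?x = "fst (state2 E d k)" let ?y = "snd (state2 E d k)"
    have nn: "\<And>j. j \<in> in_nb E i \<union> {i} \<Longrightarrow> 0 \<le> pw E d i j k * ?x j"
    proof -
      fix j assume j: "j \<in> in_nb E i \<union> {i}"
      then have "j \<in> {1..N}" using in_sub[OF E i] by auto
      then have "0 \<le> pw E d i j k" "0 \<le> ?x j"
        using pw_nn[OF p step.hyps(1)] step.IH by (auto intro: less_imp_le)
      then show "0 \<le> pw E d i j k * ?x j" by simp
    qed
    have "0 < pw E d i i k * ?x i"
      using pw_self_pos[OF p step.hyps(1) i] step.IH i by auto
    also have "\<dots> \<le> (\<Sum>j\<in>in_nb E i \<union> {i}. pw E d i j k * ?x j)"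
      using nn finite_subset[OF in_sub[OF E i]] by (intro member_le_sum) auto
    finally have 1: "0 < (\<Sum>j\<in>in_nb E i \<union> {i}. pw E d i j k * ?x j)" .
    have 2: "0 \<le> ?y i" using step.IH i by auto
    have 3: "0 \<le> aw E d i k * ?x i" using pw_self_pos[OF p step.hyps(1) i] step.IH i
      by (auto intro!: mult_nonneg_nonneg less_imp_le)
    have e: "state2 E d (Suc k) = ((\<lambda>i. (\<Sum>j\<in>in_nb E i \<union> {i}. pw E d i j k * ?x j) + ?y i),
       (\<lambda>i. aw E d i k * ?x i))" by (simp add: state2_def Let_def)
    show "0 < fst (state2 E d (Suc k)) i \<and> 0 \<le> snd (state2 E d (Suc k)) i"
      unfolding e using 1 2 3 by simp
  qed
qed

lemma st2_pos2:
  assumes E: "E \<subseteq> {1..N} \<times> {1..N}" and p: "posd N E d" and k: "2 \<le> k" and i: "i \<in> {1..N}"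
  shows "0 < snd (state2 E d k) i"
proof -
  obtain k' where k': "k = Suc k'" "1 \<le> k'" using k by (cases k) auto
  have "snd (state2 E d k) i = aw E d i k' * fst (state2 E d k') i"
    using k' by (simp add: state2_def Let_def)
  then show ?thesis using pw_self_pos[OF p k'(2) i] st2_pos[OF E p k'(2)] i by simp
qed

lemma det_main:
  fixes x0 :: "nat \<Rightarrow> real"
  assumes N: "0 < N" and E: "E \<subseteq> {1..N} \<times> {1..N}" and p: "posd N E d"
    and nz0: "\<forall>i\<in>{1..N}. wden E d i 0 \<noteq> 0"
    and L: "0 < L" and walks: "\<forall>a\<in>{1..N} \<times> UNIV. \<forall>b\<in>{1..N} \<times> UNIV. walk ({1..N} \<times> UNIV) (Rg E) L b a"
    and good: "\<forall>m0. \<exists>m\<ge>m0. goodb N E L d (2 + m*L)"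
    and i: "i \<in> {1..N}"
  shows "(\<lambda>k. fst (state1 E x0 d k) i / fst (state2 E d k) i) \<longlonglongrightarrow> (\<Sum>j=1..N. x0 j) / real N"
    "(\<lambda>k. snd (state1 E x0 d k) i / snd (state2 E d k) i) \<longlonglongrightarrow> (\<Sum>j=1..N. x0 j) / real N"
proof -
  let ?V = "{1..N}" let ?W = "{1..N} \<times> (UNIV :: bool set)"
  have finV: "finite ?V" by simp
  have nz: "\<And>j k. j \<in> ?V \<Longrightarrow> wden E d j k \<noteq> 0"
  proof -
    fix j k assume j: "j \<in> ?V"
    show "wden E d j k \<noteq> 0"
    proof (cases k)
      case 0 then show ?thesis using nz0 j by auto
    next
      case (Suc k') then show ?thesis using wden_pos[OF p _ j, of k] by auto
    qed
  qed
  have sum1: "(\<Sum>a\<in>?W. vec (state1 E x0 d k) a) = 2 * (\<Sum>j=1..N. x0 j)" for k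
  proof -
    have "(\<Sum>a\<in>?W. vec (state1 E x0 d k) a) = (\<Sum>a\<in>?W. vec ((\<lambda>i. d (DInit i)), (\<lambda>i. 2 * x0 i - d (DInit i))) a)"
      unfolding state1_def by (rule conserve_all[OF finV E nz])
    also have "\<dots> = (\<Sum>j\<in>?V. 2 * x0 j)" by (simp add: sumV2)
    finally show ?thesis by (simp add: sum_distrib_left)
  qed
  have sum2: "(\<Sum>a\<in>?W. vec (state2 E d k) a) = 2 * real N" for k
  proof -
    have "(\<Sum>a\<in>?W. vec (state2 E d k) a) = (\<Sum>a\<in>?W. vec ((\<lambda>i. 0), (\<lambda>i. 2)) a)"
      unfolding state2_def by (rule conserve_all[OF finV E nz])
    also have "\<dots> = 2 * real N" by (simp add: sumV2)
    finally show ?thesis .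
  qed
  have R: "rsys ?W (Cm E d) (\<lambda>k. vec (state1 E x0 d k)) (\<lambda>k. vec (state2 E d k)) 2
     (2 * (\<Sum>j=1..N. x0 j)) (2 * real N)"
  proof
    show "finite ?W" by simp
    show "?W \<noteq> {}" using N by auto
    show "vec (state1 E x0 d (Suc k)) a = (\<Sum>b\<in>?W. Cm E d k a b * vec (state1 E x0 d k) b)"
      if "a \<in> ?W" for k a unfolding state1_def using pp_step[OF finV E that] .
    show "vec (state2 E d (Suc k)) a = (\<Sum>b\<in>?W. Cm E d k a b * vec (state2 E d k) b)"
      if "a \<in> ?W" for k a unfolding state2_def using pp_step[OF finV E that] .
    show "0 \<le> Cm E d k a b" if "2 \<le> k" "a \<in> ?W" "b \<in> ?W" for k a b
      using Cm_nn[OF p _ that(2,3)] that(1) by auto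
    show "0 < vec (state2 E d k) a" if ka: "2 \<le> k" "a \<in> ?W" for k a
    proof -
      obtain j bj where a: "a = (j,bj)" "j \<in> ?V" using ka(2) by auto
      show ?thesis using st2_pos[OF E p, of k] st2_pos2[OF E p ka(1) a(2)] ka a by auto
    qed
    show "(\<Sum>a\<in>?W. vec (state2 E d k) a) = 2 * real N" for k by (rule sum2)
    show "(\<Sum>a\<in>?W. vec (state1 E x0 d k) a) = 2 * (\<Sum>j=1..N. x0 j)" for k by (rule sum1)
  qed
  define \<delta> where "\<delta> = (1 / (2 * (real N + 1))) ^ L"
  have d01: "0 < \<delta>" "\<delta> \<le> 1" unfolding \<delta>_def by (auto intro!: power_le_one simp: field_simps)
  have goodphi: "\<exists>m\<ge>m0. \<forall>a\<in>?W. \<forall>b\<in>?W. \<delta> \<le> phi ?W (Cm E d) (2 + m*L) L a b" for m0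
  proof -
    obtain m where m: "m \<ge> m0" "goodb N E L d (2 + m*L)" using good by blast
    have "\<forall>a\<in>?W. \<forall>b\<in>?W. \<delta> \<le> phi ?W (Cm E d) (2 + m*L) L a b"
    proof (intro ballI)
      fix a b assume ab: "a \<in> ?W" "b \<in> ?W"
      show "\<delta> \<le> phi ?W (Cm E d) (2 + m*L) L a b"
        unfolding \<delta>_def
      proof (rule phi_lb[where R="Rg E"])
        show "finite ?W" by simp
        show "0 \<le> 1 / (2 * (real N + 1))" by simp
        show "walk ?W (Rg E) L b a" using walks ab by auto
        show "\<forall>m' a b. m' < L \<longrightarrow> a \<in> ?W \<longrightarrow> b \<in> ?W \<longrightarrow> 0 \<le> Cm E d (2 + m*L + m') a b"
          using Cm_nn[OF p] by auto
        show "\<forall>m' a b. m' < L \<longrightarrow> a \<in> ?W \<longrightarrow> b \<in> ?W \<longrightarrow> Rg E b a \<longrightarrow>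
            1 / (2 * (real N + 1)) \<le> Cm E d (2 + m*L + m') a b"
        proof (intro allI impI)
          fix m' a b assume h: "m' < L" "a \<in> ?W" "b \<in> ?W" "Rg E b a"
          have g: "\<forall>i\<in>?V. (\<forall>j\<in>out_nb E i \<union> {i}. 1/2 \<le> d (DP j i (2 + m*L + m'))) \<and> 1/2 \<le> d (DA i (2 + m*L + m'))"
            using m(2) h(1) unfolding goodb_def blk_def by auto
          show "1 / (2 * (real N + 1)) \<le> Cm E d (2 + m*L + m') a b"
            using Cm_lb[OF E p _ g h(2,3,4)] by simp
        qed
      qed
    qed
    then show ?thesis using m(1) by blast
  qed
  have lim: "(\<lambda>k. vec (state1 E x0 d k) a / vec (state2 E d k) a) \<longlonglongrightarrow>
      (2 * (\<Sum>j=1..N. x0 j)) / (2 * real N)" if "a \<in> ?W" for a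
    using rsys.converge[OF R d01 L goodphi that] .
  have eq: "(2 * (\<Sum>j=1..N. x0 j)) / (2 * real N) = (\<Sum>j=1..N. x0 j) / real N" by simp
  show "(\<lambda>k. fst (state1 E x0 d k) i / fst (state2 E d k) i) \<longlonglongrightarrow> (\<Sum>j=1..N. x0 j) / real N"
    using lim[of "(i,False)"] i eq by simp
  show "(\<lambda>k. snd (state1 E x0 d k) i / snd (state2 E d k) i) \<longlonglongrightarrow> (\<Sum>j=1..N. x0 j) / real N"
    using lim[of "(i,True)"] i eq by simp
qed



instance draw :: countable by countable_datatype

fun dtime :: "draw \<Rightarrow> nat" where
  "dtime (DInit _) = 0" | "dtime (DP _ _ k) = k" | "dtime (DA _ k) = k"

lemma DP_in: "DP j i k \<in> draw_index V E \<longleftrightarrow> i \<in> V \<and> j \<in> out_nb E i \<union> {i}"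
  by (auto simp: draw_index_def)

lemma DA_in: "DA i k \<in> draw_index V E \<longleftrightarrow> i \<in> V"
  by (auto simp: draw_index_def)

lemma dens_unif: "1 \<le> dtime dr \<Longrightarrow> draw_density Mc dr = unif_density 0 1"
  by (cases dr) (auto simp: draw_density_def)

context prob_space
begin

lemma AE_pos:
  assumes dist: "\<forall>d\<in>draw_index {1..N} E. distributed M lborel (X d) (draw_density Mc d)"
  shows "AE \<omega> in M. posd N E (\<lambda>d. X d \<omega>)"
proof -
  have "AE \<omega> in M. \<forall>dr\<in>draw_index {1..N} E. 1 \<le> dtime dr \<longrightarrow> 0 < X dr \<omega> \<and> X dr \<omega> < 1"
  proof (subst AE_ball_countable)
    show "countable (draw_index {1..N} E)" by simp
    show "\<forall>dr\<in>draw_index {1..N} E. AE \<omega> in M. 1 \<le> dtime dr \<longrightarrow> 0 < X dr \<omega> \<and> X dr \<omega> < 1"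
    proof
      fix dr assume dr: "dr \<in> draw_index {1..N} E"
      show "AE \<omega> in M. 1 \<le> dtime dr \<longrightarrow> 0 < X dr \<omega> \<and> X dr \<omega> < 1"
      proof (cases "1 \<le> dtime dr")
        case False then show ?thesis by simp
      next
        case True
        have D: "distributed M lborel (X dr) (unif_density 0 1)"
          using dist dr dens_unif[OF True] by metis
        have "AE \<omega> in M. 0 < X dr \<omega> \<and> X dr \<omega> < 1"
        proof (subst distributed_AE2[OF D])
          show "Measurable.pred lborel (\<lambda>x::real. 0 < x \<and> x < 1)" by measurable
          show "AE x in lborel. 0 < unif_density 0 1 x \<longrightarrow> 0 < x \<and> x < 1"
            by (intro AE_I2) (auto simp: unif_density_def indicator_def)
        qed
        then show ?thesis by (rule eventually_mono) auto
      qed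
    qed
  qed
  then show ?thesis
  proof (rule eventually_mono)
    fix \<omega> assume h: "\<forall>dr\<in>draw_index {1..N} E. 1 \<le> dtime dr \<longrightarrow> 0 < X dr \<omega> \<and> X dr \<omega> < 1"
    show "posd N E (\<lambda>d. X d \<omega>)" unfolding posd_def
    proof (intro allI impI ballI)
      fix k :: nat and i assume k: "1 \<le> k" and i: "i \<in> {1..N}"
      have "\<forall>j\<in>out_nb E i \<union> {i}. 0 < X (DP j i k) \<omega> \<and> X (DP j i k) \<omega> < 1"
        using h k i by (auto simp: DP_in)
      moreover have "0 < X (DA i k) \<omega> \<and> X (DA i k) \<omega> < 1" using h[rule_format, of "DA i k"] k i by (auto simp: DA_in)
      ultimately show "(\<forall>j\<in>out_nb E i \<union> {i}. 0 < X (DP j i k) \<omega> \<and> X (DP j i k) \<omega> < 1) \<and>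
          0 < X (DA i k) \<omega> \<and> X (DA i k) \<omega> < 1" by blast
    qed
  qed
qed

lemma AE_nz0:
  assumes Mc: "0 < Mc" and E: "E \<subseteq> {1..N} \<times> {1..N}"
    and ind: "indep_vars (\<lambda>_. borel) X (draw_index {1..N} E)"
    and dist: "\<forall>d\<in>draw_index {1..N} E. distributed M lborel (X d) (draw_density Mc d)"
  shows "AE \<omega> in M. \<forall>i\<in>{1..N}. wden E (\<lambda>d. X d \<omega>) i 0 \<noteq> 0"
proof (subst AE_ball_countable)
  show "countable {1..N}" by simp
  show "\<forall>i\<in>{1..N}. AE \<omega> in M. wden E (\<lambda>d. X d \<omega>) i 0 \<noteq> 0"
  proof
    fix i assume i: "i \<in> {1..N}"
    define J0 where "J0 = (\<lambda>j. DP j i 0) ` (out_nb E i \<union> {i})"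
    define J where "J = insert (DA i 0) J0"
    have finout: "finite (out_nb E i \<union> {i})"
      using out_sub[OF E i] by (rule finite_subset) simp
    have finJ: "finite J" unfolding J_def J0_def using finout by simp
    have JI: "J \<subseteq> draw_index {1..N} E" unfolding J_def J0_def using i by (auto simp: DP_in DA_in)
    have wsum: "wden E (\<lambda>d. X d \<omega>) i 0 = (\<Sum>dr\<in>J. X dr \<omega>)" for \<omega>
    proof -
      have "(\<Sum>dr\<in>J. X dr \<omega>) = X (DA i 0) \<omega> + (\<Sum>dr\<in>J0. X dr \<omega>)"
        unfolding J_def using finout by (subst sum.insert) (auto simp: J0_def)
      also have "(\<Sum>dr\<in>J0. X dr \<omega>) = (\<Sum>j\<in>out_nb E i \<union> {i}. X (DP j i 0) \<omega>)"
        unfolding J0_def by (subst sum.reindex) (auto intro: inj_onI)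
      finally show ?thesis unfolding wden_def by simp
    qed
    have D: "distributed M lborel (\<lambda>x. \<Sum>dr\<in>J. X dr x)
      (normal_density (\<Sum>dr\<in>J. 0) (sqrt (\<Sum>dr\<in>J. (sqrt Mc)\<^sup>2)))"
    proof (rule sum_indep_normal)
      show "finite J" by (rule finJ)
      show "J \<noteq> {}" unfolding J_def by simp
      show "indep_vars (\<lambda>i. borel) X J" using indep_vars_subset[OF ind JI] .
      show "\<And>dr. dr \<in> J \<Longrightarrow> 0 < sqrt Mc" using Mc by simp
      show "distributed M lborel (X dr) (normal_density 0 (sqrt Mc))" if "dr \<in> J" for dr
      proof -
        have eq: "draw_density Mc dr = (\<lambda>x. ennreal (normal_density 0 (sqrt Mc) x))"
          using that unfolding J_def J0_def by (auto simp: draw_density_def)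
        have D0: "distributed M lborel (X dr) (draw_density Mc dr)" using dist JI that by auto
        show ?thesis using D0 unfolding eq .
      qed
    qed
    have "AE \<omega> in M. (\<Sum>dr\<in>J. X dr \<omega>) \<noteq> 0"
    proof (subst distributed_AE2[OF D])
      show "Measurable.pred lborel (\<lambda>x::real. x \<noteq> 0)" by measurable
      show "AE x in lborel. 0 < ennreal (normal_density (\<Sum>dr\<in>J. 0) (sqrt (\<Sum>dr\<in>J. (sqrt Mc)\<^sup>2)) x) \<longrightarrow> x \<noteq> 0"
        using AE_lborel_singleton[of 0] by (rule eventually_mono) auto
    qed
    then show "AE \<omega> in M. wden E (\<lambda>d. X d \<omega>) i 0 \<noteq> 0" by (simp add: wsum)
  qed
qed

end


lemma blk_sub: "blk N E L s \<subseteq> draw_index {1..N} E"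
  by (auto simp: blk_def DP_in DA_in)

lemma blk_time: "dr \<in> blk N E L s \<Longrightarrow> s \<le> dtime dr \<and> dtime dr < s + L"
  by (auto simp: blk_def)

lemma blk_fin_card:
  assumes E: "E \<subseteq> {1..N} \<times> {1..N}"
  shows "finite (blk N E L s) \<and> card (blk N E L s) \<le> N*N*L + N*L"
proof -
  let ?A = "(\<lambda>(j,i,k). DP j i k) ` ({1..N} \<times> {1..N} \<times> {s..<s+L})"
  let ?B = "(\<lambda>(i,k). DA i k) ` ({1..N} \<times> {s..<s+L})"
  have sub: "blk N E L s \<subseteq> ?A \<union> ?B"
    unfolding blk_def using E by (force simp: out_nb_def image_iff)
  have fin: "finite (?A \<union> ?B)" by simp
  have "card (?A \<union> ?B) \<le> card ?A + card ?B" by (rule card_Un_le)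
  also have "card ?A \<le> card ({1..N} \<times> {1..N} \<times> {s..<s+L})" by (rule card_image_le) simp
  also have "card ?B \<le> card ({1..N} \<times> {s..<s+L})" by (rule card_image_le) simp
  finally have "card (?A \<union> ?B) \<le> N*N*L + N*L" by (simp add: card_cartesian_product)
  then show ?thesis using card_mono[OF fin sub] finite_subset[OF sub fin] by simp
qed

lemma blk_ne: "0 < N \<Longrightarrow> 0 < L \<Longrightarrow> blk N E L s \<noteq> {}"
proof -
  assume "0 < N" "0 < L"
  then have "DA 1 s \<in> {DA i k |i k. i \<in> {1..N} \<and> k \<in> {s..<s+L}}" by auto
  then show ?thesis unfolding blk_def by blast
qed

context prob_space
begin

lemma prob_half:
  assumes dist: "distributed M lborel (X dr) (draw_density Mc dr)" and t: "1 \<le> dtime dr"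
  shows "prob (X dr -` {1/2..} \<inter> space M) = 1/2"
proof -
  have D: "distributed M lborel (X dr) (unif_density 0 1)" using dist dens_unif[OF t] by metis
  have "emeasure M (X dr -` {1/2..} \<inter> space M) = (\<integral>\<^sup>+x. unif_density 0 1 x * indicator {1/2..} x \<partial>lborel)"
    by (rule distributed_emeasure[OF D]) simp
  also have "\<dots> = (\<integral>\<^sup>+x. indicator {1/2..<1::real} x \<partial>lborel)"
    by (intro nn_integral_cong) (auto simp: unif_density_def indicator_def)
  also have "\<dots> = ennreal (1/2)" by simp
  finally have eq: "ennreal (prob (X dr -` {1/2..} \<inter> space M)) = ennreal (1/2)"
    using emeasure_eq_measure by metis
  show ?thesis by (rule ennreal_inj[THEN iffD1]) (use eq in auto)
qed

lemma AE_good: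
  assumes N: "0 < N" and L: "0 < L" and E: "E \<subseteq> {1..N} \<times> {1..N}"
    and ind: "indep_vars (\<lambda>_. borel) X (draw_index {1..N} E)"
    and dist: "\<forall>d\<in>draw_index {1..N} E. distributed M lborel (X d) (draw_density Mc d)"
  shows "AE \<omega> in M. \<forall>m0. \<exists>m\<ge>m0. goodb N E L (\<lambda>d. X d \<omega>) (2 + m*L)"
proof -
  define B where "B m = blk N E L (2 + m*L)" for m
  define Y where "Y m \<omega> = restrict (\<lambda>dr. X dr \<omega>) (B m)" for m \<omega>
  define A where "A m = {f \<in> space (PiM (B m) (\<lambda>_. borel)). \<not> (\<forall>dr\<in>B m. (1/2::real) \<le> f dr)}" for m
  define G where "G m = {\<omega> \<in> space M. \<forall>dr\<in>B m. 1/2 \<le> X dr \<omega>}" for m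
  define K where "K = N*N*L + N*L"
  define q :: real where "q = (1/2)^K"
  have finB: "finite (B m)" "card (B m) \<le> K" for m
    using blk_fin_card[OF E] unfolding B_def K_def by auto
  have neB: "B m \<noteq> {}" for m using blk_ne[OF N L] unfolding B_def by auto
  have BI: "B m \<subseteq> draw_index {1..N} E" for m unfolding B_def by (rule blk_sub)
  have rvX: "random_variable borel (X dr)" if "dr \<in> draw_index {1..N} E" for dr
    using ind that unfolding indep_vars_def by auto
  have disj: "disjoint_family_on B UNIV"
  proof (unfold disjoint_family_on_def, intro ballI impI)
    fix m m' :: nat assume "m \<noteq> m'"
    show "B m \<inter> B m' = {}"
    proof (rule ccontr)
      assume "B m \<inter> B m' \<noteq> {}"
      then obtain dr where "dr \<in> B m" "dr \<in> B m'" by auto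
      then have t: "2 + m*L \<le> dtime dr" "dtime dr < 2 + m*L + L" "2 + m'*L \<le> dtime dr" "dtime dr < 2 + m'*L + L"
        using blk_time unfolding B_def by blast+
      show False
      proof (cases "m < m'")
        case True
        then have "Suc m * L \<le> m' * L" by (intro mult_le_mono1) simp
        then show False using t by simp
      next
        case False
        then have "m' < m" using \<open>m \<noteq> m'\<close> by simp
        then have "Suc m' * L \<le> m * L" by (intro mult_le_mono1) simp
        then show False using t by simp
      qed
    qed
  qed
  have indY: "indep_vars (\<lambda>m. PiM (B m) (\<lambda>_. borel)) Y UNIV"
    unfolding Y_def using indep_vars_restrict[OF ind BI disj] by simp
  have Asets: "A m \<in> sets (PiM (B m) (\<lambda>_. borel))" for m
    unfolding A_def using finB(1)[of m] by measurable
  have Gdef: "G m = (\<Inter>dr\<in>B m. X dr -` {1/2..} \<inter> space M)" for m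
    unfolding G_def using neB[of m] by auto
  have Gev: "G m \<in> events" for m
    unfolding Gdef using finB(1)[of m] neB[of m] rvX BI
    by (intro sets.finite_INT) (auto intro!: measurable_sets)
  have probG: "q \<le> prob (G m)" for m
  proof -
    have "prob (G m) = (\<Prod>dr\<in>B m. prob (X dr -` {1/2..} \<inter> space M))"
      unfolding Gdef by (rule indep_varsD[OF ind neB finB(1) BI]) simp
    also have "\<dots> = (\<Prod>dr\<in>B m. 1/2)"
    proof (rule prod.cong[OF refl])
      fix dr assume dr: "dr \<in> B m"
      have "1 \<le> dtime dr" using blk_time[of dr] dr unfolding B_def by fastforce
      then show "prob (X dr -` {1/2..} \<inter> space M) = 1/2"
        using prob_half dist BI dr by blast
    qed
    also have "\<dots> = (1/2)^card (B m)" by simp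
    also have "\<dots> \<ge> (1/2)^K" using finB(2)[of m] by (intro power_decreasing) auto
    finally show ?thesis unfolding q_def by simp
  qed
  have YA: "Y m -` A m \<inter> space M = space M - G m" for m
    unfolding Y_def A_def G_def by (auto simp: space_PiM)
  have q01: "0 < q" "q \<le> 1" unfolding q_def by (auto intro: power_le_one)
  define S where "S m0 n = (\<Inter>m\<in>{m0..<m0 + Suc n}. Y m -` A m \<inter> space M)" for m0 n
  have Sev: "S m0 n \<in> events" for m0 n
    unfolding S_def YA using Gev by (intro sets.finite_INT) auto
  have probS: "prob (S m0 n) \<le> (1 - q)^Suc n" for m0 n
  proof -
    have "prob (S m0 n) = (\<Prod>m\<in>{m0..<m0 + Suc n}. prob (Y m -` A m \<inter> space M))"
      unfolding S_def by (rule indep_varsD[OF indY]) (auto simp: Asets)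
    also have "\<dots> \<le> (\<Prod>m\<in>{m0..<m0 + Suc n}. 1 - q)"
    proof (rule prod_mono)
      fix m assume "m \<in> {m0..<m0 + Suc n}"
      have "prob (Y m -` A m \<inter> space M) = 1 - prob (G m)"
        unfolding YA using prob_compl Gev by blast
      then show "0 \<le> prob (Y m -` A m \<inter> space M) \<and> prob (Y m -` A m \<inter> space M) \<le> 1 - q"
        using probG[of m] by simp
    qed
    also have "\<dots> = (1 - q)^Suc n" by simp
    finally show ?thesis .
  qed
  have AEm0: "AE \<omega> in M. \<exists>m\<ge>m0. goodb N E L (\<lambda>d. X d \<omega>) (2 + m*L)" for m0
  proof (rule AE_I')
    define Ns where "Ns = (\<Inter>n. S m0 n)"
    have Nev: "Ns \<in> events" unfolding Ns_def using Sev by (intro sets.countable_INT) auto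
    have le: "prob Ns \<le> (1-q)^Suc n" for n
    proof -
      have "prob Ns \<le> prob (S m0 n)" unfolding Ns_def using Sev by (intro finite_measure_mono) auto
      then show ?thesis using probS[of m0 n] by simp
    qed
    have lim: "(\<lambda>n. (1-q)^Suc n) \<longlonglongrightarrow> 0"
      using LIMSEQ_power_zero[of "1-q"] q01 by (intro LIMSEQ_Suc) auto
    have "prob Ns \<le> 0"
      using le by (intro LIMSEQ_le_const[OF lim]) auto
    then have "prob Ns = 0" using measure_nonneg[of M Ns] by simp
    then show "Ns \<in> null_sets M" using Nev by (simp add: emeasure_eq_measure null_sets_def)
    show "{\<omega> \<in> space M. \<not> (\<exists>m\<ge>m0. goodb N E L (\<lambda>d. X d \<omega>) (2 + m*L))} \<subseteq> Ns"
    proof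
      fix \<omega> assume h: "\<omega> \<in> {\<omega> \<in> space M. \<not> (\<exists>m\<ge>m0. goodb N E L (\<lambda>d. X d \<omega>) (2 + m*L))}"
      show "\<omega> \<in> Ns" unfolding Ns_def S_def YA
      proof (intro InterI, safe)
        fix n m assume m: "m \<in> {m0..<m0 + Suc n}"
        show "\<omega> \<in> space M" using h by auto
        assume "\<omega> \<in> G m"
        then have "goodb N E L (\<lambda>d. X d \<omega>) (2 + m*L)" unfolding G_def goodb_def B_def by auto
        then show False using h m by auto
      qed
    qed
  qed
  then show ?thesis by (simp add: AE_all_countable)
qed

end

theorem theorem1:
  fixes P :: "'w measure" and N :: nat and E :: "(nat \<times> nat) set"
    and Mc :: real and x0 :: "nat \<Rightarrow> real" and X :: "draw \<Rightarrow> 'w \<Rightarrow> real"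
  assumes "prob_space P"
    and "N > 2"
    and "E \<subseteq> {1..N} \<times> {1..N}"
    and "\<forall>i. (i, i) \<notin> E"
    and "strongly_connected {1..N} E"
    and "Mc > 0"
    and "prob_space.indep_vars P (\<lambda>_. borel) X (draw_index {1..N} E)"
    and "\<forall>d\<in>draw_index {1..N} E. distributed P lborel (X d) (draw_density Mc d)"
  shows "AE \<omega> in P. \<forall>i\<in>{1..N}.
     ((\<lambda>k. fst (state1 E x0 (\<lambda>d. X d \<omega>) k) i / fst (state2 E (\<lambda>d. X d \<omega>) k) i)
        \<longlonglongrightarrow> (\<Sum>j=1..N. x0 j) / real N)
   \<and> ((\<lambda>k. snd (state1 E x0 (\<lambda>d. X d \<omega>) k) i / snd (state2 E (\<lambda>d. X d \<omega>) k) i)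
        \<longlonglongrightarrow> (\<Sum>j=1..N. x0 j) / real N)"
proof -
  interpret prob_space P by fact
  have N: "0 < N" using assms(2) by simp
  obtain L where L: "0 < L"
    and walks: "\<forall>a\<in>{1..N} \<times> UNIV. \<forall>b\<in>{1..N} \<times> UNIV. walk ({1..N} \<times> UNIV) (Rg E) L b a"
    using walk_exists[OF assms(3) assms(5) N] by blast
  have A1: "AE \<omega> in P. posd N E (\<lambda>d. X d \<omega>)" using AE_pos[OF assms(8)] .
  have A2: "AE \<omega> in P. \<forall>i\<in>{1..N}. wden E (\<lambda>d. X d \<omega>) i 0 \<noteq> 0"
    using AE_nz0[OF assms(6) assms(3) assms(7) assms(8)] .
  have A3: "AE \<omega> in P. \<forall>m0. \<exists>m\<ge>m0. goodb N E L (\<lambda>d. X d \<omega>) (2 + m*L)"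
    using AE_good[OF N L assms(3) assms(7) assms(8)] .
  show ?thesis
    using A1 A2 A3
  proof (eventually_elim)
    case (elim \<omega>)
    show ?case
      using det_main[OF N assms(3) elim(1) elim(2) L walks elim(3)] by blast
  qed
qed

end
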